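(* Let $\mathfrak{C}=(U,M,I,N,J)$ be a formal decision context, $\mathfrak{C}^c=(U,M,I,N,\neg J)$ its complement, and $E\subseteq M$. Then: (1) $E$ is a II-consistent set of $\mathfrak{C}$ if and only if $E$ is an I-consistent set of $\mathfrak{C}^c$; (2) $E$ is a II-reduction of $\mathfrak{C}$ if and only if $E$ is an I-reduction of $\mathfrak{C}^c$.
   Context: Formal context $(U,M,I)$: $U$ and $M$ are finite nonempty sets and $I\subseteq U\times M$. For $O\subseteq U$ and $C\subseteq M$ define: - $O^{\uparrow}=\{a\mid\forall x\in O\,((x,a)\in I)\}$ and $C^{\downarrow}=\{x\mid\forall a\in C\,((x,a)\in I)\}$; - $O^{\lozenge}=\{a\in M\mid\exists x\in O\,((x,a)\in I)\}$ and $C^{\square}=\{x\in U\mid\forall a\in M\,((x,a)\in I\Rightarrow a\in C)\}$; - $O^{\square}=\{a\in M\mid\forall x\in U\,((x,a)\in I\Rightarrow x\in O)\}$ and $C^{\lozenge}=\{x\in U\mid\exists a\in C\,((x,a)\in I)\}$. The corresponding pairs are: formal concepts $(O,C)$ with $O^\uparrow=C$ and $C^\downarrow=O$ (set $L$); object-oriented concepts with $O^\square=C$ and $C^\lozenge=O$ (set $L_O$); property-oriented concepts with $O^\lozenge=C$ and $C^\square=O$ (set $L_P$). A formal decision context $\mathfrak{C}=(U,M,I,N,J)$ has conditional context $(U,M,I)$ and decision context $(U,N,J)$, with $M\cap N=\emptyset$. Its complement is $\mathfrak{C}^c=(U,M,I,N,\neg J)$, where $(x,t)\in\neg J$ iff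 $(x,t)\notin J$. For $E\subseteq M$, put $I_E=I\cap(U\times E)$; the subcontext $\mathfrak{C}(E)=(U,E,I_E,N,J)$ has conditional context $(U,E,I_E)$. An I-decision rule of a formal decision context is $(O,C)\rightarrow(Y,D)$ with $(O,C)\in L_O$ of its conditional context, $(Y,D)\in L$ of its decision context, $O\subseteq Y$, $O\ne\emptyset$ and $Y\ne U$. A II-decision rule is $(O,C)\rightarrow(Y,D)$ with $(O,C)\in L_O$ of its conditional context, $(Y,D)\in L_P$ of its decision context, $O\subseteq Y$, and (as the paper restricts II-rules in applications) $O\ne\emptyset$ and $Y\ne U$. $\mathfrak{R}_I(\cdot)$ and $\mathfrak{R}_{II}(\cdot)$ denote the sets of these rules. For a rule $(O,C)\rightarrow(Y,D)$ of $\mathfrak{C}(E)$ (respectively $\mathfrak{C}^c(E)=(U,E,I_E,N,\neg J)$) and a rule $(O_1,C_1)\rightarrow(Y_1,D_1)$ of $\mathfrak{C}$ (respectively $\mathfrak{C}^c$) of the same kind, the first implies the second iff $O_1\subseteq O\subseteq Y\subseteq Y_1$. $E$ is II-consistent for $\mathfrak{C}$ if every rule in $\mathfrak{R}_{II}(\mathfrak{C})$ is implied by some rule in $\mathfrak{R}_{II}(\mathfrak{C}(E))$. $E$ is I-consistent for $\mathfrak{C}^c$ if every rule in $\mathfrak{R}_I(\mathfrak{C}^c)$ is implied by some rule in $\mathfrak{R}_I(\mathfrak{C}^c(E))$. A II-reduction (I-reduction) is a II-consistent (I-consistent) set none of whose proper subsets is II-consistent (I-consistent). *)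

theory Defs
  imports Main
begin

definition formal_context :: "'u set \<Rightarrow> 'm set \<Rightarrow> ('u \<times> 'm) set \<Rightarrow> bool" where
  "formal_context U M I \<longleftrightarrow> finite U \<and> U \<noteq> {} \<and> finite M \<and> M \<noteq> {} \<and> I \<subseteq> U \<times> M"

definition formal_decision_context ::
  "'u set \<Rightarrow> 'm set \<Rightarrow> ('u \<times> 'm) set \<Rightarrow> 'n set \<Rightarrow> ('u \<times> 'n) set \<Rightarrow> bool" where
  "formal_decision_context U M I N J \<longleftrightarrow> formal_context U M I \<and> formal_context U N J"

definition obj_up :: "'u set \<Rightarrow> 'm set \<Rightarrow> ('u \<times> 'm) set \<Rightarrow> 'u set \<Rightarrow> 'm set" where
  "obj_up U M I X = {a \<in> M. \<forall>x\<in>X. (x, a) \<in> I}"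
definition attr_down :: "'u set \<Rightarrow> 'm set \<Rightarrow> ('u \<times> 'm) set \<Rightarrow> 'm set \<Rightarrow> 'u set" where
  "attr_down U M I C = {x \<in> U. \<forall>a\<in>C. (x, a) \<in> I}"

definition obj_dia :: "'u set \<Rightarrow> 'm set \<Rightarrow> ('u \<times> 'm) set \<Rightarrow> 'u set \<Rightarrow> 'm set" where
  "obj_dia U M I X = {a \<in> M. \<exists>x\<in>X. (x, a) \<in> I}"
definition attr_box :: "'u set \<Rightarrow> 'm set \<Rightarrow> ('u \<times> 'm) set \<Rightarrow> 'm set \<Rightarrow> 'u set" where
  "attr_box U M I C = {x \<in> U. \<forall>a\<in>M. (x, a) \<in> I \<longrightarrow> a \<in> C}"

definition obj_box :: "'u set \<Rightarrow> 'm set \<Rightarrow> ('u \<times> 'm) set \<Rightarrow> 'u set \<Rightarrow> 'm set" where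
  "obj_box U M I X = {a \<in> M. \<forall>x\<in>U. (x, a) \<in> I \<longrightarrow> x \<in> X}"
definition attr_dia :: "'u set \<Rightarrow> 'm set \<Rightarrow> ('u \<times> 'm) set \<Rightarrow> 'm set \<Rightarrow> 'u set" where
  "attr_dia U M I C = {x \<in> U. \<exists>a\<in>C. (x, a) \<in> I}"

definition concepts :: "'u set \<Rightarrow> 'm set \<Rightarrow> ('u \<times> 'm) set \<Rightarrow> ('u set \<times> 'm set) set" where
  "concepts U M I = {(X, C). obj_up U M I X = C \<and> attr_down U M I C = X}"
definition oo_concepts :: "'u set \<Rightarrow> 'm set \<Rightarrow> ('u \<times> 'm) set \<Rightarrow> ('u set \<times> 'm set) set" where
  "oo_concepts U M I = {(X, C). obj_box U M I X = C \<and> attr_dia U M I C = X}"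
definition po_concepts :: "'u set \<Rightarrow> 'm set \<Rightarrow> ('u \<times> 'm) set \<Rightarrow> ('u set \<times> 'm set) set" where
  "po_concepts U M I = {(X, C). obj_dia U M I X = C \<and> attr_box U M I C = X}"

definition neg_rel :: "'u set \<Rightarrow> 'n set \<Rightarrow> ('u \<times> 'n) set \<Rightarrow> ('u \<times> 'n) set" where
  "neg_rel U N J = (U \<times> N) - J"
definition restrict_rel :: "'u set \<Rightarrow> ('u \<times> 'm) set \<Rightarrow> 'm set \<Rightarrow> ('u \<times> 'm) set" where
  "restrict_rel U I E = I \<inter> (U \<times> E)"

type_synonym ('u, 'm, 'n) rule = "('u set \<times> 'm set) \<times> ('u set \<times> 'n set)"

definition rules_I ::
  "'u set \<Rightarrow> 'm set \<Rightarrow> ('u \<times> 'm) set \<Rightarrow> 'n set \<Rightarrow> ('u \<times> 'n) set \<Rightarrow> ('u, 'm, 'n) rule set" where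
  "rules_I U M I N J = {((X, C), (Y, D)). (X, C) \<in> oo_concepts U M I \<and> (Y, D) \<in> concepts U N J
      \<and> X \<subseteq> Y \<and> X \<noteq> {} \<and> Y \<noteq> U}"

definition rules_II ::
  "'u set \<Rightarrow> 'm set \<Rightarrow> ('u \<times> 'm) set \<Rightarrow> 'n set \<Rightarrow> ('u \<times> 'n) set \<Rightarrow> ('u, 'm, 'n) rule set" where
  "rules_II U M I N J = {((X, C), (Y, D)). (X, C) \<in> oo_concepts U M I \<and> (Y, D) \<in> po_concepts U N J
      \<and> X \<subseteq> Y \<and> X \<noteq> {} \<and> Y \<noteq> U}"

definition rule_implies :: "('u, 'm, 'n) rule \<Rightarrow> ('u, 'm, 'n) rule \<Rightarrow> bool" where
  "rule_implies r r1 \<longleftrightarrow>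
     (let X = fst (fst r); Y = fst (snd r); X1 = fst (fst r1); Y1 = fst (snd r1)
      in X1 \<subseteq> X \<and> X \<subseteq> Y \<and> Y \<subseteq> Y1)"

definition II_consistent ::
  "'u set \<Rightarrow> 'm set \<Rightarrow> ('u \<times> 'm) set \<Rightarrow> 'n set \<Rightarrow> ('u \<times> 'n) set \<Rightarrow> 'm set \<Rightarrow> bool" where
  "II_consistent U M I N J E \<longleftrightarrow>
     (\<forall>r1 \<in> rules_II U M I N J. \<exists>r \<in> rules_II U E (restrict_rel U I E) N J. rule_implies r r1)"

definition I_consistent ::
  "'u set \<Rightarrow> 'm set \<Rightarrow> ('u \<times> 'm) set \<Rightarrow> 'n set \<Rightarrow> ('u \<times> 'n) set \<Rightarrow> 'm set \<Rightarrow> bool" where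
  "I_consistent U M I N J E \<longleftrightarrow>
     (\<forall>r1 \<in> rules_I U M I N J. \<exists>r \<in> rules_I U E (restrict_rel U I E) N J. rule_implies r r1)"

definition II_reduction ::
  "'u set \<Rightarrow> 'm set \<Rightarrow> ('u \<times> 'm) set \<Rightarrow> 'n set \<Rightarrow> ('u \<times> 'n) set \<Rightarrow> 'm set \<Rightarrow> bool" where
  "II_reduction U M I N J E \<longleftrightarrow>
     II_consistent U M I N J E \<and> (\<forall>F. F \<subset> E \<longrightarrow> \<not> II_consistent U M I N J F)"

definition I_reduction ::
  "'u set \<Rightarrow> 'm set \<Rightarrow> ('u \<times> 'm) set \<Rightarrow> 'n set \<Rightarrow> ('u \<times> 'n) set \<Rightarrow> 'm set \<Rightarrow> bool" where
  "I_reduction U M I N J E \<longleftrightarrow>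
     I_consistent U M I N J E \<and> (\<forall>F. F \<subset> E \<longrightarrow> \<not> I_consistent U M I N J F)"

end

theory Submission
  imports Defs
begin

lemma po_to_c:
  assumes "(Y, D) \<in> po_concepts U N J"
  shows "(Y, N - D) \<in> concepts U N (neg_rel U N J)"
proof -
  have Y: "Y = attr_box U N J D" and D: "D = obj_dia U N J Y"
    using assms by (auto simp: po_concepts_def)
  have YU: "Y \<subseteq> U" using Y by (auto simp: attr_box_def)
  have "obj_up U N (neg_rel U N J) Y = N - D"
    using YU D by (auto simp: obj_up_def obj_dia_def neg_rel_def)
  moreover have "attr_down U N (neg_rel U N J) (N - D) = Y"
    using Y D by (auto simp: attr_down_def attr_box_def neg_rel_def obj_dia_def)
  ultimately show ?thesis by (simp add: concepts_def)
qed

lemma c_to_po: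
  assumes "(Y, D) \<in> concepts U N (neg_rel U N J)"
  shows "(Y, N - D) \<in> po_concepts U N J"
proof -
  have Y: "Y = attr_down U N (neg_rel U N J) D" and D: "D = obj_up U N (neg_rel U N J) Y"
    using assms by (auto simp: concepts_def)
  have YU: "Y \<subseteq> U" using Y by (auto simp: attr_down_def)
  have DN: "D \<subseteq> N" using D by (auto simp: obj_up_def)
  have "obj_dia U N J Y = N - D"
    using YU D by (auto simp: obj_up_def obj_dia_def neg_rel_def)
  moreover have "attr_box U N J (N - D) = attr_down U N (neg_rel U N J) D"
    using DN by (auto simp: attr_down_def attr_box_def neg_rel_def)
  hence "attr_box U N J (N - D) = Y" using Y by simp
  ultimately show ?thesis by (simp add: po_concepts_def)
qed

lemma II_to_I:
  assumes "r \<in> rules_II U M I N J"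
  shows "\<exists>r' \<in> rules_I U M I N (neg_rel U N J). fst (fst r') = fst (fst r) \<and> fst (snd r') = fst (snd r)"
proof -
  obtain X C Y D where r: "r = ((X, C), (Y, D))" by (metis prod.collapse)
  show ?thesis
    using assms po_to_c[of Y D U N J]
    by (intro bexI[of _ "((X, C), (Y, N - D))"]) (auto simp: r rules_II_def rules_I_def)
qed

lemma I_to_II:
  assumes "r \<in> rules_I U M I N (neg_rel U N J)"
  shows "\<exists>r' \<in> rules_II U M I N J. fst (fst r') = fst (fst r) \<and> fst (snd r') = fst (snd r)"
proof -
  obtain X C Y D where r: "r = ((X, C), (Y, D))" by (metis prod.collapse)
  show ?thesis
    using assms c_to_po[of Y D U N J]
    by (intro bexI[of _ "((X, C), (Y, N - D))"]) (auto simp: r rules_II_def rules_I_def)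
qed

lemma cons_eq:
  "II_consistent U M I N J E \<longleftrightarrow> I_consistent U M I N (neg_rel U N J) E"
proof
  assume H: "II_consistent U M I N J E"
  show "I_consistent U M I N (neg_rel U N J) E"
    unfolding I_consistent_def
  proof
    fix r1 assume "r1 \<in> rules_I U M I N (neg_rel U N J)"
    then obtain s1 where s1: "s1 \<in> rules_II U M I N J" "fst (fst s1) = fst (fst r1)" "fst (snd s1) = fst (snd r1)"
      using I_to_II by blast
    then obtain s where s: "s \<in> rules_II U E (restrict_rel U I E) N J" "rule_implies s s1"
      using H unfolding II_consistent_def by blast
    then obtain r where r: "r \<in> rules_I U E (restrict_rel U I E) N (neg_rel U N J)"
       "fst (fst r) = fst (fst s)" "fst (snd r) = fst (snd s)"
      using II_to_I by blast
    have "rule_implies r r1" using s(2) r s1 by (simp add: rule_implies_def Let_def)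
    then show "\<exists>r\<in>rules_I U E (restrict_rel U I E) N (neg_rel U N J). rule_implies r r1"
      using r(1) by blast
  qed
next
  assume H: "I_consistent U M I N (neg_rel U N J) E"
  show "II_consistent U M I N J E"
    unfolding II_consistent_def
  proof
    fix r1 assume "r1 \<in> rules_II U M I N J"
    then obtain s1 where s1: "s1 \<in> rules_I U M I N (neg_rel U N J)" "fst (fst s1) = fst (fst r1)" "fst (snd s1) = fst (snd r1)"
      using II_to_I by blast
    then obtain s where s: "s \<in> rules_I U E (restrict_rel U I E) N (neg_rel U N J)" "rule_implies s s1"
      using H unfolding I_consistent_def by blast
    then obtain r where r: "r \<in> rules_II U E (restrict_rel U I E) N J"
       "fst (fst r) = fst (fst s)" "fst (snd r) = fst (snd s)"
      using I_to_II by blast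
    have "rule_implies r r1" using s(2) r s1 by (simp add: rule_implies_def Let_def)
    then show "\<exists>r\<in>rules_II U E (restrict_rel U I E) N J. rule_implies r r1"
      using r(1) by blast
  qed
qed

theorem theorem4p10:
  fixes U :: "'u set" and M :: "'m set" and I :: "('u \<times> 'm) set"
    and N :: "'n set" and J :: "('u \<times> 'n) set" and E :: "'m set"
  assumes "formal_decision_context U M I N J"
    and "E \<subseteq> M"
  shows "(II_consistent U M I N J E \<longleftrightarrow> I_consistent U M I N (neg_rel U N J) E)
       \<and> (II_reduction U M I N J E \<longleftrightarrow> I_reduction U M I N (neg_rel U N J) E)"
  by (simp add: cons_eq II_reduction_def I_reduction_def)

end
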